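(* Let $w$ be an instance of Metric-MAXCUT on a finite set $X$, let $\epsilon>0$, and let $(L,R)$ be a $(3+\epsilon)$-locally stable cut. Then $L$ or $R$ is a metric ball, i.e. a set of the form $\{y\in X: w(c,y)\le r\}$ for some $c\in X$ and $r\ge0$.
   Context: An instance of Metric-MAXCUT is a finite set $X$ with a metric $w$. For $x\in X$ and $B\subseteq X$, $w(x,B)=\sum_{b\in B}w(x,b)$. A cut $(L,R)$ (a partition of $X$) is $\gamma$-locally stable if $w(x,R)\ge\gamma w(x,L)$ for every $x\in L$ and $w(z,L)\ge\gamma w(z,R)$ for every $z\in R$. *)

theory Defs
  imports Complex_Main
begin

definition metric_on :: "'a set \<Rightarrow> ('a \<Rightarrow> 'a \<Rightarrow> real) \<Rightarrow> bool" where
  "metric_on X w \<longleftrightarrow>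
     (\<forall>x\<in>X. \<forall>y\<in>X. w x y \<ge> 0) \<and>
     (\<forall>x\<in>X. \<forall>y\<in>X. w x y = 0 \<longleftrightarrow> x = y) \<and>
     (\<forall>x\<in>X. \<forall>y\<in>X. w x y = w y x) \<and>
     (\<forall>x\<in>X. \<forall>y\<in>X. \<forall>z\<in>X. w x z \<le> w x y + w y z)"

definition wset :: "('a \<Rightarrow> 'a \<Rightarrow> real) \<Rightarrow> 'a \<Rightarrow> 'a set \<Rightarrow> real" where
  "wset w x B = (\<Sum>b\<in>B. w x b)"

definition is_cut :: "'a set \<Rightarrow> 'a set \<Rightarrow> 'a set \<Rightarrow> bool" where
  "is_cut X L R \<longleftrightarrow> L \<union> R = X \<and> L \<inter> R = {}"

definition locally_stable ::
  "real \<Rightarrow> ('a \<Rightarrow> 'a \<Rightarrow> real) \<Rightarrow> 'a set \<Rightarrow> 'a set \<Rightarrow> bool" where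
  "locally_stable \<gamma> w L R \<longleftrightarrow>
     (\<forall>x\<in>L. wset w x R \<ge> \<gamma> * wset w x L) \<and>
     (\<forall>z\<in>R. wset w z L \<ge> \<gamma> * wset w z R)"

definition is_metric_ball :: "'a set \<Rightarrow> ('a \<Rightarrow> 'a \<Rightarrow> real) \<Rightarrow> 'a set \<Rightarrow> bool" where
  "is_metric_ball X w B \<longleftrightarrow>
     (\<exists>c\<in>X. \<exists>r::real. r \<ge> 0 \<and> B = {y\<in>X. w c y \<le> r})"

end

theory Submission
  imports Defs
begin

lemma stable_sym: "locally_stable g w L R \<Longrightarrow> locally_stable g w R L"
  unfolding locally_stable_def by blast

lemma cut_sym: "is_cut X L R \<Longrightarrow> is_cut X R L"
  unfolding is_cut_def by blast

lemma arith_core: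
  fixes l m g s t Ac Ax Az Bc Bz :: real
  assumes F1: "Bz \<le> l*s + Ac" and F2: "Az \<ge> Bc - m*s" and F3: "Bz \<ge> g*Az"
    and F4: "Bc \<ge> g*Ac" and F5: "l*t \<le> Ac + Ax" and F6: "Ax \<le> Ac"
    and F7: "s \<le> t" and s0: "s > 0" and F8: "m \<le> l" and g3: "g > 3" and l1: "l \<ge> 1"
    and m0: "m \<ge> 0"
  shows False
proof -
  have g0: "g > 0" using g3 by simp
  have a: "g*Az \<ge> g*Bc - g*m*s" using mult_left_mono[OF F2, of g] g0 by (simp add: algebra_simps)
  have b: "g*Bc \<ge> g*g*Ac" using mult_left_mono[OF F4, of g] g0 by (simp add: algebra_simps)
  have c: "l*s \<le> l*t" using F7 l1 by (simp add: mult_left_mono)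
  have d: "l*s \<le> 2*Ac" using c F5 F6 by linarith
  have e: "(g*g-1)*Ac \<le> (l+g*m)*s" using F1 F3 a b by (simp add: algebra_simps)
  have g9: "g*g > 3*3" using g3 by (intro mult_strict_mono) auto
  have f: "l*s*(g*g-1) \<le> 2*Ac*(g*g-1)" using mult_right_mono[OF d, of "g*g-1"] g9 by simp
  have h: "s*(l*(g*g-1) - 2*(l+g*m)) \<le> 0"
    using f e by (simp add: algebra_simps)
  have gm: "g*m \<le> g*l" using F8 g0 by (simp add: mult_left_mono)
  have p1: "(g-3)*(g+1) > 0" using g3 by simp
  have p2: "l*((g-3)*(g+1)) > 0" using p1 l1 by simp
  have pos: "l*(g*g-1) - 2*(l+g*m) > 0" using p2 gm by (simp add: algebra_simps)
  have "s*(l*(g*g-1) - 2*(l+g*m)) > 0" using pos s0 by simp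
  with h show False by linarith
qed


lemma core:
  fixes w :: "'a \<Rightarrow> 'a \<Rightarrow> real"
  assumes fin: "finite X" and met: "metric_on X w" and cut: "is_cut X L R"
    and st: "locally_stable g w L R" and g3: "g > 3"
    and card: "card R \<le> card L"
    and cL: "c \<in> L" and cmax: "\<forall>y\<in>L. wset w y L \<le> wset w c L"
    and xL: "x \<in> L" and zR: "z \<in> R" and le: "w c z \<le> w c x"
  shows False
proof -
  have LX: "L \<subseteq> X" and RX: "R \<subseteq> X" and disj: "L \<inter> R = {}" using cut unfolding is_cut_def by auto
  have finL: "finite L" using fin LX finite_subset by blast
  have finR: "finite R" using fin RX finite_subset by blast
  have nonneg: "\<And>a b. a\<in>X \<Longrightarrow> b\<in>X \<Longrightarrow> w a b \<ge> 0" using met unfolding metric_on_def by blast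
  have zero: "\<And>a b. a\<in>X \<Longrightarrow> b\<in>X \<Longrightarrow> w a b = 0 \<longleftrightarrow> a = b" using met unfolding metric_on_def by blast
  have sym: "\<And>a b. a\<in>X \<Longrightarrow> b\<in>X \<Longrightarrow> w a b = w b a" using met unfolding metric_on_def by blast
  have tri: "\<And>a b d. a\<in>X \<Longrightarrow> b\<in>X \<Longrightarrow> d\<in>X \<Longrightarrow> w a d \<le> w a b + w b d"
    using met unfolding metric_on_def by blast
  have cX: "c \<in> X" and xX: "x \<in> X" and zX: "z \<in> X" using cL xL zR LX RX by auto
  have czne: "c \<noteq> z" using cL zR disj by auto
  have s0: "w c z > 0" using nonneg[OF cX zX] zero[OF cX zX] czne by linarith
  have F1: "wset w z L \<le> real (card L) * w c z + wset w c L"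
  proof -
    have "wset w z L = (\<Sum>y\<in>L. w z y)" by (simp add: wset_def)
    also have "\<dots> \<le> (\<Sum>y\<in>L. w c z + w c y)"
    proof (rule sum_mono)
      fix y assume "y \<in> L" hence yX: "y \<in> X" using LX by auto
      show "w z y \<le> w c z + w c y" using tri[OF zX cX yX] sym[OF zX cX] by simp
    qed
    also have "\<dots> = real (card L) * w c z + wset w c L" by (simp add: sum.distrib wset_def)
    finally show ?thesis .
  qed
  have F2: "wset w z R \<ge> wset w c R - real (card R) * w c z"
  proof -
    have "wset w c R = (\<Sum>u\<in>R. w c u)" by (simp add: wset_def)
    also have "\<dots> \<le> (\<Sum>u\<in>R. w c z + w z u)"
    proof (rule sum_mono)
      fix u assume "u \<in> R" hence uX: "u \<in> X" using RX by auto
      show "w c u \<le> w c z + w z u" using tri[OF cX zX uX] by simp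
    qed
    also have "\<dots> = real (card R) * w c z + wset w z R" by (simp add: sum.distrib wset_def)
    finally show ?thesis by simp
  qed
  have F3: "wset w z L \<ge> g * wset w z R" using st zR unfolding locally_stable_def by blast
  have F4: "wset w c R \<ge> g * wset w c L" using st cL unfolding locally_stable_def by blast
  have F5: "real (card L) * w c x \<le> wset w c L + wset w x L"
  proof -
    have "real (card L) * w c x = (\<Sum>y\<in>L. w c x)" by simp
    also have "\<dots> \<le> (\<Sum>y\<in>L. w c y + w x y)"
    proof (rule sum_mono)
      fix y assume "y \<in> L" hence yX: "y \<in> X" using LX by auto
      show "w c x \<le> w c y + w x y" using tri[OF cX yX xX] sym[OF xX yX] by simp
    qed
    also have "\<dots> = wset w c L + wset w x L" by (simp add: sum.distrib wset_def)
    finally show ?thesis .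
  qed
  have F6: "wset w x L \<le> wset w c L" using cmax xL by blast
  have l1: "real (card L) \<ge> 1" proof -
    have "card L \<noteq> 0" using cL finL by auto
    thus ?thesis by simp
  qed
  show False
    by (rule arith_core[OF F1 F2 F3 F4 F5 F6 le s0 _ g3 l1]) (use card in auto)
qed

lemma ball_side:
  fixes w :: "'a \<Rightarrow> 'a \<Rightarrow> real"
  assumes fin: "finite X" and met: "metric_on X w" and cut: "is_cut X L R"
    and st: "locally_stable g w L R" and g3: "g > 3"
    and card: "card R \<le> card L" and ne: "L \<noteq> {}"
  shows "is_metric_ball X w L"
proof -
  have LX: "L \<subseteq> X" and RX: "R \<subseteq> X" and un: "L \<union> R = X" using cut unfolding is_cut_def by auto
  have finL: "finite L" using fin LX finite_subset by blast
  define f where "f = (\<lambda>y. wset w y L)"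
  obtain c where cL: "c \<in> L" and cf: "f c = Max (f ` L)" proof -
    have "Max (f ` L) \<in> f ` L" using finL ne by (intro Max_in) auto
    thus ?thesis using that by auto
  qed
  have cmax: "\<forall>y\<in>L. wset w y L \<le> wset w c L" using cf finL unfolding f_def by auto
  define r where "r = Max (w c ` L)"
  have rin: "r \<in> w c ` L" unfolding r_def using finL ne by (intro Max_in) auto
  have rge: "\<And>y. y \<in> L \<Longrightarrow> w c y \<le> r" unfolding r_def using finL by auto
  have cX: "c \<in> X" using cL LX by auto
  have r0: "r \<ge> 0" proof -
    have "w c c \<ge> 0" using met cX unfolding metric_on_def by blast
    thus ?thesis using rge[OF cL] by linarith
  qed
  have "L = {y\<in>X. w c y \<le> r}"
  proof
    show "L \<subseteq> {y\<in>X. w c y \<le> r}" using LX rge by auto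
    show "{y\<in>X. w c y \<le> r} \<subseteq> L"
    proof
      fix y assume "y \<in> {y\<in>X. w c y \<le> r}"
      hence yX: "y \<in> X" and yr: "w c y \<le> r" by auto
      show "y \<in> L"
      proof (rule ccontr)
        assume "y \<notin> L" hence yR: "y \<in> R" using yX un by auto
        obtain x where xL: "x \<in> L" and xr: "r = w c x" using rin by auto
        show False using core[OF fin met cut st g3 card cL cmax xL yR] yr xr by simp
      qed
    qed
  qed
  thus ?thesis unfolding is_metric_ball_def using cX r0 by blast
qed

theorem theorem5:
  fixes X :: "'a set" and w :: "'a \<Rightarrow> 'a \<Rightarrow> real" and \<epsilon> :: real
    and L R :: "'a set"
  assumes "finite X" and "X \<noteq> {}"
    and "metric_on X w"
    and "\<epsilon> > 0"
    and "is_cut X L R"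
    and "locally_stable (3 + \<epsilon>) w L R"
  shows "is_metric_ball X w L \<or> is_metric_ball X w R"
proof -
  have g3: "3 + \<epsilon> > 3" using assms(4) by simp
  have LX: "L \<subseteq> X" and RX: "R \<subseteq> X" and un: "L \<union> R = X" using assms(5) unfolding is_cut_def by auto
  have finL: "finite L" and finR: "finite R" using assms(1) LX RX finite_subset by blast+
  show ?thesis
  proof (cases "card R \<le> card L")
    case True
    have "L \<noteq> {}"
    proof
      assume "L = {}"
      hence "card R = 0" using True by simp
      hence "R = {}" using finR by simp
      with \<open>L = {}\<close> un assms(2) show False by simp
    qed
    thus ?thesis using ball_side[OF assms(1,3,5,6) g3 True] by simp
  next
    case False
    hence c: "card L \<le> card R" by simp
    have "R \<noteq> {}" using False by auto
    thus ?thesis using ball_side[OF assms(1,3) cut_sym[OF assms(5)] stable_sym[OF assms(6)] g3 c] by simp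
  qed
qed

end
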